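(* Let $(x^k)$ be generated by the variational-equilibrium augmented Lagrangian method described below, where each step satisfies the inexactness assumption described below, let $\bar x$ be a limit point of $(x^k)$, and assume that $h$ satisfies (classical) CPLD in $\bar x$. Then $\bar x$ is a global solution of $$\min_{x\in\mathbb{R}^n}\ \|g_+(x)\|^2\quad\text{s.t.}\quad h(x)\le0.$$ In particular, if there are feasible points (points $x$ with $g(x)\le 0$ and $h(x)\le0$), then $\bar x$ is feasible.
   Context: GNEP with shared constraints: $N$ players, $x=(x^1,\ldots,x^N)\in\mathbb{R}^n$, $x^\nu\in\mathbb{R}^{n_\nu}$; player $\nu$ solves $\min_{x^\nu}\theta_\nu(x)$ s.t. $g(x)\le0$, $h(x)\le0$, where $\theta_\nu:\mathbb{R}^n\to\mathbb{R}$, $g:\mathbb{R}^n\to\mathbb{R}^m$, $h:\mathbb{R}^n\to\mathbb{R}^p$ are continuously differentiable and all components of $g$ and $h$ are convex. Notation: $v_+=\max\{0,v\}$ componentwise; $\nabla f$ = transposed Jacobian, $\nabla_{x^\nu}f$ its rows for $x^\nu$; $\min$ componentwise; Euclidean norms. Augmented Lagrangian of player $\nu$: $L_a^\nu(x,u;\rho)=\theta_\nu(x)+\frac{\rho}{2}\|(g(x)+u/\rho)_+\|^2$. Method: choose $u^{\max}\ge0$, $\tau\in(0,1)$, $\gamma>1$, $\rho_0>0$, $x^0\in\mathbb{R}^n$, $\lambda^0\in\mathbb{R}^m$, $\mu^0\in\mathbb{R}^p$, $u^0\in[0,u^{\max}]^m$. For $k=0,1,2,\dots$ (assumed to run forever):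 (1) compute $(x^{k+1},\mu^{k+1})\in\mathbb{R}^{n+p}$ satisfying the inexactness assumption; (2) $\lambda^{k+1}=(u^k+\rho_kg(x^{k+1}))_+$; (3) if $\|\min\{-g(x^{k+1}),\lambda^{k+1}\}\|\le\tau\|\min\{-g(x^k),\lambda^k\}\|$ set $\rho_{k+1}=\rho_k$, else $\rho_{k+1}=\gamma\rho_k$; (4) $u^{k+1}=\min\{\lambda^{k+1},u^{\max}\}$ componentwise. Inexactness assumption: for all $k$ and every $\nu$, $\|\nabla_{x^\nu}L_a^\nu(x^{k+1},u^k;\rho_k)+\nabla_{x^\nu}h(x^{k+1})\mu^{k+1}\|\le\varepsilon_k$ and $\|\min\{-h(x^{k+1}),\mu^{k+1}\}\|\le\varepsilon'_k$, with $(\varepsilon_k)\subset[0,\infty)$ bounded and $(\varepsilon'_k)\subset[0,\infty)$, $\varepsilon'_k\to0$. Classical CPLD for $h$ at $x$ with $h(x)\le0$: whenever $\nabla h_j(x)$, $j\in J$, are positively linearly dependent (a nontrivial nonnegative combination vanishes) for some $J\subset\{j:h_j(x)=0\}$, the gradients $\nabla h_j(y)$, $j\in J$, are linearly dependent for all $y$ in a neighbourhood of $x$. *)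

theory Defs
  imports "HOL-Analysis.Analysis"
begin

definition vplus :: "real^'m \<Rightarrow> real^'m" where
  "vplus v = (\<chi> j. max 0 (v $ j))"

definition vmin :: "real^'m \<Rightarrow> real^'m \<Rightarrow> real^'m" where
  "vmin a b = (\<chi> j. min (a $ j) (b $ j))"

text \<open>Gradient of a real-valued function on R^n (the Frechet derivative applied to
  the unit vectors), and the partial gradient with respect to the variables of
  block nu (coordinates i with blk i = nu), padded with zeros; its Euclidean norm
  equals the norm of the partial gradient in R^(n_nu).\<close>
definition grad :: "(real^'n \<Rightarrow> real) \<Rightarrow> real^'n \<Rightarrow> real^'n" where
  "grad f x = (\<chi> i. frechet_derivative f (at x) (axis i 1))"

definition bgrad :: "('n \<Rightarrow> 'N) \<Rightarrow> 'N \<Rightarrow> (real^'n \<Rightarrow> real) \<Rightarrow> real^'n \<Rightarrow> real^'n" where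
  "bgrad blk nu f x = (\<chi> i. if blk i = nu then grad f x $ i else 0)"

definition C1 :: "(real^'n \<Rightarrow> real) \<Rightarrow> bool" where
  "C1 f \<longleftrightarrow> (\<forall>x. f differentiable (at x)) \<and> continuous_on UNIV (grad f)"

definition La :: "(real^'n \<Rightarrow> real) \<Rightarrow> (real^'n \<Rightarrow> real^'m) \<Rightarrow> real^'n \<Rightarrow> real^'m \<Rightarrow> real \<Rightarrow> real" where
  "La th g x u rho = th x + rho / 2 * (norm (vplus (g x + (1 / rho) *\<^sub>R u)))\<^sup>2"

text \<open>Classical CPLD for h at x (x assumed feasible separately).\<close>
definition CPLD :: "(real^'n \<Rightarrow> real^'p) \<Rightarrow> real^'n \<Rightarrow> bool" where
  "CPLD h x \<longleftrightarrow>
    (\<forall>J. J \<subseteq> {j. h x $ j = 0} \<longrightarrow>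
      (\<exists>c. (\<forall>j\<in>J. c j \<ge> 0) \<and> (\<exists>j\<in>J. c j \<noteq> 0) \<and>
           (\<Sum>j\<in>J. c j *\<^sub>R grad (\<lambda>y. h y $ j) x) = 0) \<longrightarrow>
      (\<exists>e>0. \<forall>y\<in>ball x e. \<exists>c. (\<exists>j\<in>J. c j \<noteq> 0) \<and>
           (\<Sum>j\<in>J. c j *\<^sub>R grad (\<lambda>y. h y $ j) y) = 0))"

end

theory Submission
  imports Defs
begin


lemma tangent_ineq:
  fixes f :: "real^'n \<Rightarrow> real"
  assumes cv: "convex_on UNIV f" and d: "(f has_derivative f') (at x)"
  shows "f' (y - x) \<le> f y - f x"
proof -
  define p where "p t = f (x + t *\<^sub>R (y - x))" for t :: real
  have cvp: "convex_on UNIV p"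
  proof (rule convex_onI)
    fix t a b :: real assume "t > 0" "t < 1"
    have "x + ((1 - t) * a + t * b) *\<^sub>R (y - x) = (1 - t) *\<^sub>R (x + a *\<^sub>R (y - x)) + t *\<^sub>R (x + b *\<^sub>R (y - x))"
      by (simp add: algebra_simps)
    then show "p ((1 - t) *\<^sub>R a + t *\<^sub>R b) \<le> (1 - t) * p a + t * p b"
      unfolding p_def using convex_onD[OF cv, of t] \<open>t>0\<close> \<open>t<1\<close> by simp
  qed simp
  have dl: "((\<lambda>t. x + t *\<^sub>R (y - x)) has_derivative (\<lambda>t. t *\<^sub>R (y - x))) (at 0)"
    by (auto intro!: derivative_eq_intros)
  have "(p has_derivative (\<lambda>t. f' (t *\<^sub>R (y - x)))) (at 0)"
    unfolding p_def using has_derivative_compose[OF dl] d by (simp add: o_def)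
  moreover have "linear f'" using d has_derivative_linear by blast
  ultimately have "(p has_derivative (\<lambda>t. t * f' (y - x))) (at 0)"
    by (simp add: linear_scale)
  moreover have "(\<lambda>t. t * f' (y - x)) = (*) (f' (y - x))" by (auto simp: fun_eq_iff)
  ultimately have "(p has_field_derivative f' (y - x)) (at 0 within UNIV)"
    by (simp add: has_field_derivative_def)
  from convex_on_imp_above_tangent[OF cvp _ _ _ this, of 1]
  have "p 1 - p 0 \<ge> f' (y - x) * (1 - 0)" by simp
  then show ?thesis by (simp add: p_def)
qed

lemma grad_inner:
  fixes f :: "real^'n \<Rightarrow> real"
  assumes d: "(f has_derivative f') (at x)"
  shows "grad f x \<bullet> v = f' v"
proof -
  have fd: "frechet_derivative f (at x) = f'" using frechet_derivative_at[OF d] by simp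
  have lin: "linear f'" using d has_derivative_linear by blast
  have "f' v = f' (\<Sum>i\<in>UNIV. (v$i) *s axis i 1)" by (simp add: basis_expansion)
  also have "\<dots> = (\<Sum>i\<in>UNIV. v$i * f' (axis i 1))"
    using lin by (simp add: linear_sum linear_scale scalar_mult_eq_scaleR)
  finally show ?thesis unfolding grad_def inner_vec_def fd by (simp add: mult.commute)
qed

lemma c1: "t \<ge> 0 \<Longrightarrow> t + h \<ge> 0 \<Longrightarrow> \<bar>(max 0 (t + h))\<^sup>2 - (max 0 t)\<^sup>2 - 2 * max 0 t * h\<bar> \<le> h\<^sup>2" for t h :: real
  by (simp add: power2_eq_square algebra_simps)
lemma c2: "t \<ge> 0 \<Longrightarrow> \<not> t + h \<ge> 0 \<Longrightarrow> \<bar>(max 0 (t + h))\<^sup>2 - (max 0 t)\<^sup>2 - 2 * max 0 t * h\<bar> \<le> h\<^sup>2" for t h :: real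
proof -
  assume h1: "t \<ge> 0" "\<not> t + h \<ge> 0"
  have a: "0 \<le> h*h + 2*(h*t) + t*t" using zero_le_square[of "t+h"] by (simp add: algebra_simps)
  have e: "(max 0 (t + h))\<^sup>2 - (max 0 t)\<^sup>2 - 2 * max 0 t * h = - (t*t) - 2*(h*t)"
      using h1 by (simp add: max_def power2_eq_square algebra_simps)
  have "t * t \<le> - (h*t)" using mult_nonneg_nonneg[of t "-(t+h)"] h1 by (simp add: algebra_simps)
  moreover have "0 \<le> t * t" by simp
  ultimately have "\<bar>- (t*t) - 2*(h*t)\<bar> \<le> h * h" unfolding abs_le_iff using a by linarith
  then show ?thesis unfolding e by (simp add: power2_eq_square)
qed
lemma c3: "\<not> t \<ge> 0 \<Longrightarrow> t + h \<ge> 0 \<Longrightarrow> \<bar>(max 0 (t + h))\<^sup>2 - (max 0 t)\<^sup>2 - 2 * max 0 t * h\<bar> \<le> h\<^sup>2" for t h :: real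
proof -
  assume h1: "\<not> t \<ge> 0" "t + h \<ge> 0"
    then have e: "(max 0 (t + h))\<^sup>2 - (max 0 t)\<^sup>2 - 2 * max 0 t * h = (t+h)*(t+h)"
      by (simp add: max_def power2_eq_square)
    have "(t+h)*(t+h) \<le> h * h" using mult_mono[of "t+h" h "t+h" h] h1 by simp
    moreover have "0 \<le> (t+h)*(t+h)" by simp
    ultimately have "\<bar>(t+h)*(t+h)\<bar> \<le> h * h" unfolding abs_le_iff by linarith
    then show ?thesis unfolding e by (simp add: power2_eq_square)
qed
lemma c4: "\<not> t \<ge> 0 \<Longrightarrow> \<not> t + h \<ge> 0 \<Longrightarrow> \<bar>(max 0 (t + h))\<^sup>2 - (max 0 t)\<^sup>2 - 2 * max 0 t * h\<bar> \<le> h\<^sup>2" for t h :: real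
  by (simp add: max_def)
lemma qineq: "\<bar>(max 0 (t + h))\<^sup>2 - (max 0 t)\<^sup>2 - 2 * max 0 t * h\<bar> \<le> h\<^sup>2" for t h :: real
  using c1[of t h] c2[of t h] c3[of t h] c4[of t h] by blast

lemma qderiv: "((\<lambda>t::real. (max 0 t)\<^sup>2) has_field_derivative 2 * max 0 t) (at t)"
proof -
  have "((\<lambda>h. ((max 0 (t + h))\<^sup>2 - (max 0 t)\<^sup>2) / h - 2 * max 0 t) \<longlongrightarrow> 0) (at 0)"
  proof (rule Lim_null_comparison)
    have X: "norm (((max 0 (t + h))\<^sup>2 - (max 0 t)\<^sup>2) / h - 2 * max 0 t) \<le> \<bar>h\<bar>" if False: "h \<noteq> 0" for h
    proof -
        have "((max 0 (t + h))\<^sup>2 - (max 0 t)\<^sup>2) / h - 2 * max 0 t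
             = ((max 0 (t + h))\<^sup>2 - (max 0 t)\<^sup>2 - 2 * max 0 t * h) / h"
          using False by (simp add: field_simps)
        also have "\<bar>\<dots>\<bar> \<le> h\<^sup>2 / \<bar>h\<bar>" unfolding abs_divide
          using qineq[of t h] False by (simp add: divide_right_mono)
        also have "\<dots> = \<bar>h\<bar>" using False by (simp add: power2_eq_square)
          (metis abs_mult_self_eq abs_eq_0 nonzero_mult_div_cancel_left)
        finally show ?thesis by simp
    qed
    show "\<forall>\<^sub>F h in at 0. norm (((max 0 (t + h))\<^sup>2 - (max 0 t)\<^sup>2) / h - 2 * max 0 t) \<le> \<bar>h\<bar>"
      unfolding eventually_at_filter by (rule always_eventually) (metis X real_norm_def)
    show "((\<lambda>h::real. \<bar>h\<bar>) \<longlongrightarrow> 0) (at 0)"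
      using tendsto_rabs[OF tendsto_ident_at[of 0 UNIV]] by simp
  qed
  then have "((\<lambda>h. ((max 0 (t + h))\<^sup>2 - (max 0 t)\<^sup>2) / h) \<longlongrightarrow> 2 * max 0 t) (at 0)"
    by (rule LIM_zero_cancel)
  then show ?thesis by (simp add: DERIV_def)
qed



lemma C1_deriv: "C1 f \<Longrightarrow> (f has_derivative frechet_derivative f (at x)) (at x)"
  by (simp add: C1_def frechet_derivative_works)

lemma norm_vplus_sq: "(norm (vplus v))\<^sup>2 = (\<Sum>j\<in>UNIV. (max 0 (v $ j))\<^sup>2)"
  unfolding dot_square_norm[symmetric] inner_vec_def vplus_def by (simp add: power2_eq_square)

lemma mx: "\<rho> > 0 \<Longrightarrow> \<rho> * max 0 (a + b / \<rho>) = max 0 (b + \<rho> * (a::real))"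
proof -
  assume r: "\<rho> > 0"
  have "\<rho> * max 0 (a + b / \<rho>) = max (\<rho> * 0) (\<rho> * (a + b / \<rho>))"
    using r by (simp add: max_mult_distrib_left)
  also have "\<rho> * (a + b / \<rho>) = b + \<rho> * a" using r by (simp add: field_simps)
  finally show ?thesis by simp
qed

lemma grad_La:
  fixes th :: "real^'n \<Rightarrow> real" and g :: "real^'n \<Rightarrow> real^'m"
  assumes th: "C1 th" and gC: "\<And>j. C1 (\<lambda>y. g y $ j)" and rho: "\<rho> > 0"
  shows "grad (\<lambda>y. La th g y u \<rho>) x
       = grad th x + (\<Sum>j\<in>UNIV. max 0 (u$j + \<rho> * g x $ j) *\<^sub>R grad (\<lambda>y. g y $ j) x)"
proof -
  define G' where "G' j = frechet_derivative (\<lambda>y. g y $ j) (at x)" for j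
  define T' where "T' = frechet_derivative th (at x)"
  have La_eq: "(\<lambda>y. La th g y u \<rho>) = (\<lambda>y. th y + \<rho> / 2 * (\<Sum>j\<in>UNIV. (max 0 (g y $ j + u $ j / \<rho>))\<^sup>2))"
    by (simp add: La_def norm_vplus_sq fun_eq_iff)
  have dj: "((\<lambda>y. (max 0 (g y $ j + u $ j / \<rho>))\<^sup>2) has_derivative
            (\<lambda>v. G' j v * (2 * max 0 (g x $ j + u $ j / \<rho>)))) (at x)" for j
  proof -
    have "((\<lambda>y. g y $ j + u $ j / \<rho>) has_derivative G' j) (at x)"
      using C1_deriv[OF gC[of j], of x] unfolding G'_def
      by (auto intro!: derivative_eq_intros)
    from DERIV_compose_FDERIV[OF qderiv this] show ?thesis by simp
  qed
  have "((\<lambda>y. La th g y u \<rho>) has_derivative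
        (\<lambda>v. T' v + \<rho> / 2 * (\<Sum>j\<in>UNIV. G' j v * (2 * max 0 (g x $ j + u $ j / \<rho>))))) (at x)"
    unfolding La_eq T'_def
    by (intro has_derivative_add C1_deriv[OF th] has_derivative_mult_right has_derivative_sum dj)
  from frechet_derivative_at[OF this]
  have fd: "frechet_derivative (\<lambda>y. La th g y u \<rho>) (at x) =
        (\<lambda>v. T' v + \<rho> / 2 * (\<Sum>j\<in>UNIV. G' j v * (2 * max 0 (g x $ j + u $ j / \<rho>))))" by simp
  have mx: "\<rho> * max 0 (g x $ j + u $ j / \<rho>) = max 0 (u$j + \<rho> * g x $ j)" for j
    using mx[OF rho] .
  show ?thesis
    unfolding vec_eq_iff
  proof
    fix i
    have "grad (\<lambda>y. La th g y u \<rho>) x $ i = T' (axis i 1) +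
       (\<Sum>j\<in>UNIV. G' j (axis i 1) * (\<rho> * max 0 (g x $ j + u $ j / \<rho>)))"
      unfolding grad_def fd by (simp add: sum_distrib_left algebra_simps)
    also have "\<dots> = (grad th x + (\<Sum>j\<in>UNIV. max 0 (u$j + \<rho> * g x $ j) *\<^sub>R grad (\<lambda>y. g y $ j) x)) $ i"
      unfolding mx by (simp add: grad_def T'_def G'_def sum_component mult.commute)
    finally show "grad (\<lambda>y. La th g y u \<rho>) x $ i = (grad th x + (\<Sum>j\<in>UNIV. max 0 (u$j + \<rho> * g x $ j) *\<^sub>R grad (\<lambda>y. g y $ j) x)) $ i" .
  qed
qed



lemma cara:
  fixes v :: "'p \<Rightarrow> 'a::real_vector"
  assumes "finite J" "\<forall>j\<in>J. c j \<ge> 0"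
  shows "\<exists>J'\<subseteq>J. \<exists>c'. (\<forall>j. c' j \<ge> 0) \<and> (\<forall>j. j \<notin> J' \<longrightarrow> c' j = 0) \<and>
           (\<Sum>j\<in>J'. c' j *\<^sub>R v j) = (\<Sum>j\<in>J. c j *\<^sub>R v j) \<and>
           (\<forall>d. (\<Sum>j\<in>J'. d j *\<^sub>R v j) = 0 \<longrightarrow> (\<forall>j\<in>J'. d j = 0))"
  using assms
proof (induction J arbitrary: c rule: finite_psubset_induct)
  case (psubset J)
  show ?case
  proof (cases "\<forall>d. (\<Sum>j\<in>J. d j *\<^sub>R v j) = 0 \<longrightarrow> (\<forall>j\<in>J. d j = 0)")
    case True
    show ?thesis
      by (rule exI[of _ J], simp, rule exI[of _ "\<lambda>j. if j \<in> J then c j else 0"])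
        (use True psubset.prems in auto)
  next
    case False
    then obtain d0 j1 where d0: "(\<Sum>j\<in>J. d0 j *\<^sub>R v j) = 0" "j1 \<in> J" "d0 j1 \<noteq> 0" by blast
    define d where "d = (if d0 j1 > 0 then d0 else (\<lambda>j. - d0 j))"
    have d: "(\<Sum>j\<in>J. d j *\<^sub>R v j) = 0" "d j1 > 0"
      using d0 by (auto simp: d_def sum_negf)
    define P where "P = {j\<in>J. d j > 0}"
    have P: "finite P" "P \<noteq> {}" "j1 \<in> P" using psubset.hyps d d0 by (auto simp: P_def)
    define t where "t = Min ((\<lambda>j. c j / d j) ` P)"
    have "t \<in> (\<lambda>j. c j / d j) ` P" unfolding t_def using P by (intro Min_in) auto
    then obtain j0 where j0: "j0 \<in> P" "t = c j0 / d j0" by auto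
    have tle: "t \<le> c j / d j" if "j \<in> P" for j unfolding t_def using P that by auto
    have t0: "t \<ge> 0" using j0 psubset.prems by (auto simp: P_def)
    define c2 where "c2 j = c j - t * d j" for j
    have c2nn: "\<forall>j\<in>J - {j0}. c2 j \<ge> 0"
    proof
      fix j assume j: "j \<in> J - {j0}"
      show "c2 j \<ge> 0"
      proof (cases "d j > 0")
        case True
        then have "t * d j \<le> c j" using tle[of j] j by (auto simp: P_def pos_le_divide_eq)
        then show ?thesis by (simp add: c2_def)
      next
        case False
        then have "t * d j \<le> 0" using t0 by (simp add: mult_nonneg_nonpos)
        moreover have "c j \<ge> 0" using psubset.prems j by auto
        ultimately show ?thesis by (simp add: c2_def)
      qed
    qed
    have c2j0: "c2 j0 = 0" using j0 P by (auto simp: c2_def P_def)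
    have j0J: "j0 \<in> J" using j0 by (auto simp: P_def)
    have "(\<Sum>j\<in>J. c2 j *\<^sub>R v j) = (\<Sum>j\<in>J. c j *\<^sub>R v j) - t *\<^sub>R (\<Sum>j\<in>J. d j *\<^sub>R v j)"
      by (simp add: c2_def scaleR_diff_left sum_subtractf scaleR_sum_right)
    also have "\<dots> = (\<Sum>j\<in>J. c j *\<^sub>R v j)" using d by simp
    finally have s1: "(\<Sum>j\<in>J. c2 j *\<^sub>R v j) = (\<Sum>j\<in>J. c j *\<^sub>R v j)" .
    have s2: "(\<Sum>j\<in>J - {j0}. c2 j *\<^sub>R v j) = (\<Sum>j\<in>J. c2 j *\<^sub>R v j)"
      using sum.remove[OF psubset.hyps(1) j0J, of "\<lambda>j. c2 j *\<^sub>R v j"] c2j0 by simp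
    have "J - {j0} \<subset> J" using j0J by auto
    from psubset.IH[OF this c2nn]
    obtain J' c' where H1: "J' \<subseteq> J - {j0}" and H2: "(\<forall>j. c' j \<ge> 0)" and H3: "(\<forall>j. j \<notin> J' \<longrightarrow> c' j = 0)"
      and H4: "(\<Sum>j\<in>J'. c' j *\<^sub>R v j) = (\<Sum>j\<in>J - {j0}. c2 j *\<^sub>R v j)"
      and H5: "(\<forall>d. (\<Sum>j\<in>J'. d j *\<^sub>R v j) = 0 \<longrightarrow> (\<forall>j\<in>J'. d j = 0))" by blast
    have H1': "J' \<subseteq> J" using H1 by blast
    have H4': "(\<Sum>j\<in>J'. c' j *\<^sub>R v j) = (\<Sum>j\<in>J. c j *\<^sub>R v j)" using H4 s1 s2 by simp
    show ?thesis
      by (rule exI[of _ J'], rule conjI[OF H1'], rule exI[of _ c'], intro conjI H2 H3 H4' H5)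
  qed
qed



lemma cone_limit:
  fixes a :: "'p::finite \<Rightarrow> real^'n \<Rightarrow> real^'n" and y :: "nat \<Rightarrow> real^'n"
    and c :: "nat \<Rightarrow> 'p \<Rightarrow> real"
  assumes cont: "\<And>j. isCont (a j) xbar"
    and cpld: "\<And>J. J \<subseteq> A \<Longrightarrow> (\<exists>c. (\<forall>j\<in>J. c j \<ge> 0) \<and> (\<exists>j\<in>J. c j \<noteq> 0) \<and> (\<Sum>j\<in>J. c j *\<^sub>R a j xbar) = 0)
        \<Longrightarrow> (\<exists>e>0. \<forall>y\<in>ball xbar e. \<exists>c. (\<exists>j\<in>J. c j \<noteq> 0) \<and> (\<Sum>j\<in>J. c j *\<^sub>R a j y) = 0)"
    and y: "y \<longlonglongrightarrow> xbar" and cnn: "\<And>k j. c k j \<ge> 0"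
    and lim: "(\<lambda>k. \<Sum>j\<in>A. c k j *\<^sub>R a j (y k)) \<longlonglongrightarrow> z"
  shows "\<exists>\<nu>. (\<forall>j. \<nu> j \<ge> 0) \<and> (\<Sum>j\<in>A. \<nu> j *\<^sub>R a j xbar) = z"
proof -
  have X: "\<forall>k. \<exists>J'. J' \<subseteq> A \<and> (\<exists>c'. (\<forall>j. c' j \<ge> 0) \<and> (\<forall>j. j \<notin> J' \<longrightarrow> c' j = 0) \<and>
           (\<Sum>j\<in>J'. c' j *\<^sub>R a j (y k)) = (\<Sum>j\<in>A. c k j *\<^sub>R a j (y k)) \<and>
           (\<forall>d. (\<Sum>j\<in>J'. d j *\<^sub>R a j (y k)) = 0 \<longrightarrow> (\<forall>j\<in>J'. d j = 0)))"
  proof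
    fix k
    show "\<exists>J'. J' \<subseteq> A \<and> (\<exists>c'. (\<forall>j. c' j \<ge> 0) \<and> (\<forall>j. j \<notin> J' \<longrightarrow> c' j = 0) \<and>
           (\<Sum>j\<in>J'. c' j *\<^sub>R a j (y k)) = (\<Sum>j\<in>A. c k j *\<^sub>R a j (y k)) \<and>
           (\<forall>d. (\<Sum>j\<in>J'. d j *\<^sub>R a j (y k)) = 0 \<longrightarrow> (\<forall>j\<in>J'. d j = 0)))"
      by (rule cara[of A "c k" "\<lambda>j. a j (y k)"]) (simp_all add: cnn)
  qed
  obtain J where HJ: "\<forall>k. J k \<subseteq> A \<and> (\<exists>c'. (\<forall>j. c' j \<ge> 0) \<and> (\<forall>j. j \<notin> J k \<longrightarrow> c' j = 0) \<and>
           (\<Sum>j\<in>J k. c' j *\<^sub>R a j (y k)) = (\<Sum>j\<in>A. c k j *\<^sub>R a j (y k)) \<and>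
           (\<forall>d. (\<Sum>j\<in>J k. d j *\<^sub>R a j (y k)) = 0 \<longrightarrow> (\<forall>j\<in>J k. d j = 0)))"
    using choice[OF X] by blast
  then have JA: "\<And>k. J k \<subseteq> A" by blast
  from HJ have "\<forall>k. \<exists>c'. (\<forall>j. c' j \<ge> 0) \<and> (\<forall>j. j \<notin> J k \<longrightarrow> c' j = 0) \<and>
           (\<Sum>j\<in>J k. c' j *\<^sub>R a j (y k)) = (\<Sum>j\<in>A. c k j *\<^sub>R a j (y k)) \<and>
           (\<forall>d. (\<Sum>j\<in>J k. d j *\<^sub>R a j (y k)) = 0 \<longrightarrow> (\<forall>j\<in>J k. d j = 0))" by blast
  from choice[OF this] obtain C where HC: "\<forall>k. (\<forall>j. C k j \<ge> 0) \<and> (\<forall>j. j \<notin> J k \<longrightarrow> C k j = 0) \<and>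
           (\<Sum>j\<in>J k. C k j *\<^sub>R a j (y k)) = (\<Sum>j\<in>A. c k j *\<^sub>R a j (y k)) \<and>
           (\<forall>d. (\<Sum>j\<in>J k. d j *\<^sub>R a j (y k)) = 0 \<longrightarrow> (\<forall>j\<in>J k. d j = 0))" by blast
  have Cnn: "\<And>k j. C k j \<ge> 0" using HC by blast
  have C0: "\<And>k j. j \<notin> J k \<Longrightarrow> C k j = 0" using HC by blast
  have Csum: "\<And>k. (\<Sum>j\<in>J k. C k j *\<^sub>R a j (y k)) = (\<Sum>j\<in>A. c k j *\<^sub>R a j (y k))" using HC by blast
  have Cind: "\<And>k d. (\<Sum>j\<in>J k. d j *\<^sub>R a j (y k)) = 0 \<Longrightarrow> (\<forall>j\<in>J k. d j = 0)" using HC by blast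
  have "finite (range J)"
    by (rule finite_subset[of _ "Pow UNIV"]) auto
  from pigeonhole_infinite[OF infinite_UNIV_nat this]
  obtain k0 where "infinite {k. J k = J k0}" by auto
  from infinite_enumerate[OF this] obtain r :: "nat \<Rightarrow> nat" where r1: "strict_mono r" and r2': "\<forall>n. r n \<in> {k. J k = J k0}"
    by blast
  have r: "strict_mono r" "\<And>n. J (r n) = J k0" using r1 r2' by auto
  define J0 where "J0 = J k0"
  have J0A: "J0 \<subseteq> A" using JA J0_def by auto
  define Y where "Y n = y (r n)" for n
  have Y: "Y \<longlonglongrightarrow> xbar" unfolding Y_def using LIMSEQ_subseq_LIMSEQ[OF y r(1)] by (simp add: o_def)
  define S where "S n = (\<Sum>j\<in>J0. C (r n) j *\<^sub>R a j (Y n))" for n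
  have S: "S \<longlonglongrightarrow> z"
    using LIMSEQ_subseq_LIMSEQ[OF lim r(1)] unfolding S_def Y_def J0_def
    by (simp add: o_def Csum[symmetric] r(2))
  define Cv where "Cv n = (\<chi> j. C (r n) j)" for n
  define T where "T n = 1 / (1 + norm (Cv n))" for n
  define D where "D n = T n *\<^sub>R Cv n" for n
  have Tpos: "T n > 0" for n unfolding T_def by (simp add: add_pos_nonneg)
  have nD: "norm (D n) = 1 - T n" for n
  proof -
    have p: "1 + norm (Cv n) > 0" by (simp add: add_pos_nonneg)
    have "norm (D n) = T n * norm (Cv n)" using Tpos[of n] by (simp add: D_def)
    also have "\<dots> = 1 - T n" unfolding T_def using p by (simp add: field_simps)
    finally show ?thesis .
  qed
  have bD: "bounded (range D)"
    unfolding bounded_iff using nD Tpos by (intro exI[of _ 1]) (auto simp: less_imp_le)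
  have Tle: "T n \<le> 1" for n using nD[of n] norm_ge_zero[of "D n"] by linarith
  have bT: "bounded (range T)"
    unfolding bounded_iff using Tpos Tle by (intro exI[of _ 1]) (auto simp: less_imp_le)
  have "bounded (range (\<lambda>n. (D n, T n)))"
    by (rule bounded_subset[OF bounded_Times[OF bD bT]]) auto
  from bounded_imp_convergent_subsequence[OF this]
  obtain l r2 where r2: "strict_mono r2" "((\<lambda>n. (D n, T n)) \<circ> r2) \<longlonglongrightarrow> l" by blast
  define dd where "dd = fst l"
  define tt where "tt = snd l"
  have Dl: "(\<lambda>m. D (r2 m)) \<longlonglongrightarrow> dd" using tendsto_fst[OF r2(2)] by (simp add: dd_def o_def)
  have Tl: "(\<lambda>m. T (r2 m)) \<longlonglongrightarrow> tt" using tendsto_snd[OF r2(2)] by (simp add: tt_def o_def)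
  have Yl: "(\<lambda>m. Y (r2 m)) \<longlonglongrightarrow> xbar" using LIMSEQ_subseq_LIMSEQ[OF Y r2(1)] by (simp add: o_def)
  have Sl: "(\<lambda>m. S (r2 m)) \<longlonglongrightarrow> z" using LIMSEQ_subseq_LIMSEQ[OF S r2(1)] by (simp add: o_def)
  have DS: "(\<Sum>j\<in>J0. D n $ j *\<^sub>R a j (Y n)) = T n *\<^sub>R S n" for n
    unfolding D_def S_def Cv_def by (simp add: scaleR_sum_right)
  have lim1: "(\<lambda>m. \<Sum>j\<in>J0. D (r2 m) $ j *\<^sub>R a j (Y (r2 m))) \<longlonglongrightarrow> (\<Sum>j\<in>J0. dd $ j *\<^sub>R a j xbar)"
    by (intro tendsto_intros tendsto_vec_nth Dl isCont_tendsto_compose[OF cont Yl])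
  have lim2: "(\<lambda>m. \<Sum>j\<in>J0. D (r2 m) $ j *\<^sub>R a j (Y (r2 m))) \<longlonglongrightarrow> tt *\<^sub>R z"
    unfolding DS by (intro tendsto_intros Tl Sl)
  have eq: "(\<Sum>j\<in>J0. dd $ j *\<^sub>R a j xbar) = tt *\<^sub>R z" using LIMSEQ_unique[OF lim1 lim2] .
  have ddnn: "dd $ j \<ge> 0" for j
  proof (rule LIMSEQ_le_const[OF tendsto_vec_nth[OF Dl]])
    show "\<exists>N. \<forall>n\<ge>N. 0 \<le> D (r2 n) $ j"
      using Tpos Cnn by (auto simp: D_def Cv_def less_imp_le)
  qed
  have dd0: "dd $ j = 0" if "j \<notin> J0" for j
  proof -
    have "(\<lambda>m. D (r2 m) $ j) = (\<lambda>m. 0)" using C0 r(2) that unfolding D_def Cv_def J0_def by auto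
    then have "(\<lambda>m. D (r2 m) $ j) \<longlonglongrightarrow> 0" by simp
    from LIMSEQ_unique[OF tendsto_vec_nth[OF Dl, of j] this] show ?thesis .
  qed
  have tt0: "tt \<ge> 0" by (rule LIMSEQ_le_const[OF Tl]) (auto intro: less_imp_le[OF Tpos])
  show ?thesis
  proof (cases "tt = 0")
    case False
    then have ttp: "tt > 0" using tt0 by simp
    define \<nu> where "\<nu> j = dd $ j / tt" for j
    have "(\<Sum>j\<in>A. \<nu> j *\<^sub>R a j xbar) = (\<Sum>j\<in>J0. \<nu> j *\<^sub>R a j xbar)"
      using J0A dd0 by (intro sum.mono_neutral_right) (auto simp: \<nu>_def)
    also have "\<dots> = (1 / tt) *\<^sub>R (\<Sum>j\<in>J0. dd $ j *\<^sub>R a j xbar)"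
      by (simp add: \<nu>_def scaleR_sum_right)
    also have "\<dots> = z" using eq ttp by simp
    finally show ?thesis using ddnn ttp by (intro exI[of _ \<nu>]) (auto simp: \<nu>_def)
  next
    case True
    have l1: "(\<lambda>m. norm (D (r2 m))) \<longlonglongrightarrow> 1 - tt"
      unfolding nD by (intro tendsto_intros Tl)
    have l2: "(\<lambda>m. norm (D (r2 m))) \<longlonglongrightarrow> norm dd" by (intro tendsto_intros Dl)
    have "norm dd = 1" using LIMSEQ_unique[OF l2 l1] True by simp
    then have "dd \<noteq> 0" by auto
    then obtain j1 where j1: "dd $ j1 \<noteq> 0" by (auto simp: vec_eq_iff)
    then have j1J: "j1 \<in> J0" using dd0 by blast
    have "\<exists>c. (\<forall>j\<in>J0. c j \<ge> 0) \<and> (\<exists>j\<in>J0. c j \<noteq> 0) \<and> (\<Sum>j\<in>J0. c j *\<^sub>R a j xbar) = 0"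
      using eq True ddnn j1 j1J by (intro exI[of _ "\<lambda>j. dd $ j"]) auto
    from cpld[OF J0A this] obtain e where e: "e > 0"
      "\<forall>y\<in>ball xbar e. \<exists>c. (\<exists>j\<in>J0. c j \<noteq> 0) \<and> (\<Sum>j\<in>J0. c j *\<^sub>R a j y) = 0" by blast
    from Yl e(1) have "\<forall>\<^sub>F m in sequentially. dist (Y (r2 m)) xbar < e"
      by (rule tendstoD)
    then obtain N where "\<forall>m\<ge>N. dist (Y (r2 m)) xbar < e" unfolding eventually_sequentially by blast
    then obtain m where "dist (Y (r2 m)) xbar < e" by blast
    then have "Y (r2 m) \<in> ball xbar e" by (simp add: dist_commute)
    with e(2) obtain d where d: "\<exists>j\<in>J0. d j \<noteq> 0" "(\<Sum>j\<in>J0. d j *\<^sub>R a j (Y (r2 m))) = 0" by blast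
    have "\<forall>j\<in>J (r (r2 m)). d j = 0"
      by (rule Cind) (use d(2) in \<open>simp add: Y_def J0_def r(2)\<close>)
    then show ?thesis using d(1) r(2)[of "r2 m"] by (auto simp: J0_def)
  qed
qed



lemma sq_plus_ineq: "(max 0 t)\<^sup>2 + 2 * max 0 t * (s - t) \<le> (max 0 s)\<^sup>2" for s t :: real
proof (cases "t \<ge> 0")
  case True
  show ?thesis
  proof (cases "s \<ge> 0")
    case True2: True
    have "0 \<le> (s - t) * (s - t)" by simp
    then have "t * t + 2 * t * (s - t) \<le> s * s" by (simp add: algebra_simps)
    then show ?thesis using True True2 by (simp add: max_def power2_eq_square)
  next
    case False
    have "t * s \<le> 0" using True False by (simp add: mult_nonneg_nonpos)
    moreover have "0 \<le> t * t" by simp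
    moreover have "t * t + 2 * t * (s - t) = 2 * (t * s) - t * t" by (simp add: algebra_simps)
    ultimately have "t * t + 2 * t * (s - t) \<le> 0" by linarith
    then show ?thesis using True False by (simp add: max_def power2_eq_square)
  qed
next
  case False
  then show ?thesis by (simp add: max_def)
qed

lemma tangent_grad:
  fixes f :: "real^'n \<Rightarrow> real"
  assumes "C1 f" "convex_on UNIV f"
  shows "grad f x \<bullet> (y - x) \<le> f y - f x"
proof -
  have "grad f x \<bullet> (y - x) = frechet_derivative f (at x) (y - x)" by (rule grad_inner[OF C1_deriv[OF assms(1)]])
  also have "\<dots> \<le> f y - f x" by (rule tangent_ineq[OF assms(2) C1_deriv[OF assms(1)]])
  finally show ?thesis .
qed

lemma opt_from_kkt:
  fixes g :: "real^'n \<Rightarrow> real^'m" and h :: "real^'n \<Rightarrow> real^'p"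
  assumes g_C1: "\<And>j. C1 (\<lambda>y. g y $ j)" and h_C1: "\<And>j. C1 (\<lambda>y. h y $ j)"
    and g_convex: "\<And>j. convex_on UNIV (\<lambda>y. g y $ j)" and h_convex: "\<And>j. convex_on UNIV (\<lambda>y. h y $ j)"
    and nu: "\<And>j. \<nu> j \<ge> 0"
    and kkt: "(\<Sum>j\<in>A. \<nu> j *\<^sub>R grad (\<lambda>y. h y $ j) xbar) = - (\<Sum>j\<in>UNIV. max 0 (g xbar $ j) *\<^sub>R grad (\<lambda>y. g y $ j) xbar)"
    and A: "\<And>j. j \<in> A \<Longrightarrow> h xbar $ j = 0"
    and y: "\<forall>j. h y $ j \<le> 0"
  shows "(norm (vplus (g xbar)))\<^sup>2 \<le> (norm (vplus (g y)))\<^sup>2"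
proof -
  define d where "d = y - xbar"
  define w where "w = (\<Sum>j\<in>UNIV. max 0 (g xbar $ j) *\<^sub>R grad (\<lambda>y. g y $ j) xbar)"
  have e2: "(\<Sum>j\<in>A. \<nu> j *\<^sub>R grad (\<lambda>y. h y $ j) xbar) \<bullet> d = - (w \<bullet> d)"
    unfolding kkt w_def by (rule inner_minus_left)
  have "- (w \<bullet> d) = (\<Sum>j\<in>A. \<nu> j * (grad (\<lambda>y. h y $ j) xbar \<bullet> d))"
    unfolding e2[symmetric] by (simp add: inner_sum_left)
  also have "\<dots> \<le> (\<Sum>j\<in>A. \<nu> j * (h y $ j - h xbar $ j))"
    using tangent_grad[OF h_C1 h_convex] nu unfolding d_def by (intro sum_mono mult_left_mono) auto
  also have "\<dots> \<le> 0" using A y nu by (intro sum_nonpos) (simp add: mult_nonneg_nonpos)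
  finally have wd: "w \<bullet> d \<ge> 0" by simp
  have "w \<bullet> d = (\<Sum>j\<in>UNIV. max 0 (g xbar $ j) * (grad (\<lambda>y. g y $ j) xbar \<bullet> d))"
    unfolding w_def by (simp add: inner_sum_left)
  also have "\<dots> \<le> (\<Sum>j\<in>UNIV. max 0 (g xbar $ j) * (g y $ j - g xbar $ j))"
    using tangent_grad[OF g_C1 g_convex] unfolding d_def by (intro sum_mono mult_left_mono) auto
  finally have wd2: "0 \<le> (\<Sum>j\<in>UNIV. max 0 (g xbar $ j) * (g y $ j - g xbar $ j))" using wd by linarith
  have "(norm (vplus (g xbar)))\<^sup>2 \<le> (\<Sum>j\<in>UNIV. (max 0 (g xbar $ j))\<^sup>2 + 2 * max 0 (g xbar $ j) * (g y $ j - g xbar $ j))"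
    unfolding norm_vplus_sq sum.distrib using wd2 by (simp add: sum_distrib_left[symmetric] mult.assoc)
  also have "\<dots> \<le> (\<Sum>j\<in>UNIV. (max 0 (g y $ j))\<^sup>2)" by (intro sum_mono sq_plus_ineq)
  finally show ?thesis unfolding norm_vplus_sq .
qed



theorem theorem5p3:
  fixes theta :: "'N::finite \<Rightarrow> real^'n \<Rightarrow> real"
    and blk :: "'n \<Rightarrow> 'N"
    and g :: "real^'n \<Rightarrow> real^'m"
    and h :: "real^'n \<Rightarrow> real^'p"
    and umax tau gamma :: real
    and x :: "nat \<Rightarrow> real^'n"
    and lam u :: "nat \<Rightarrow> real^'m"
    and mu :: "nat \<Rightarrow> real^'p"
    and rho eps eps' :: "nat \<Rightarrow> real"
    and xbar :: "real^'n"
  assumes theta_C1: "\<And>nu. C1 (theta nu)"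
    and g_C1: "\<And>j. C1 (\<lambda>y. g y $ j)"
    and h_C1: "\<And>j. C1 (\<lambda>y. h y $ j)"
    and g_convex: "\<And>j. convex_on UNIV (\<lambda>y. g y $ j)"
    and h_convex: "\<And>j. convex_on UNIV (\<lambda>y. h y $ j)"
    and umax: "umax \<ge> 0"
    and tau: "0 < tau" "tau < 1"
    and gamma: "gamma > 1"
    and rho0: "rho 0 > 0"
    and u0: "\<And>j. 0 \<le> u 0 $ j \<and> u 0 $ j \<le> umax"
    and inexact1: "\<And>k nu. norm (bgrad blk nu (\<lambda>y. La (theta nu) g y (u k) (rho k)) (x (Suc k))
                     + (\<Sum>j\<in>UNIV. (mu (Suc k) $ j) *\<^sub>R bgrad blk nu (\<lambda>y. h y $ j) (x (Suc k))))
                   \<le> eps k"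
    and inexact2: "\<And>k. norm (vmin (- h (x (Suc k))) (mu (Suc k))) \<le> eps' k"
    and eps_nonneg: "\<And>k. eps k \<ge> 0"
    and eps_bounded: "bounded (range eps)"
    and eps'_nonneg: "\<And>k. eps' k \<ge> 0"
    and eps'_lim: "eps' \<longlonglongrightarrow> 0"
    and lam_upd: "\<And>k. lam (Suc k) = vplus (u k + rho k *\<^sub>R g (x (Suc k)))"
    and rho_upd: "\<And>k. rho (Suc k) =
         (if norm (vmin (- g (x (Suc k))) (lam (Suc k))) \<le> tau * norm (vmin (- g (x k)) (lam k))
          then rho k else gamma * rho k)"
    and u_upd: "\<And>k. u (Suc k) = (\<chi> j. min (lam (Suc k) $ j) umax)"
    and limpt: "\<exists>\<phi>. strict_mono \<phi> \<and> (x \<circ> \<phi>) \<longlonglongrightarrow> xbar"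
    and cpld: "CPLD h xbar"
  shows "(\<forall>j. h xbar $ j \<le> 0)
      \<and> (\<forall>y. (\<forall>j. h y $ j \<le> 0) \<longrightarrow> (norm (vplus (g xbar)))\<^sup>2 \<le> (norm (vplus (g y)))\<^sup>2)
      \<and> ((\<exists>y. (\<forall>j. g y $ j \<le> 0) \<and> (\<forall>j. h y $ j \<le> 0)) \<longrightarrow>
           (\<forall>j. g xbar $ j \<le> 0) \<and> (\<forall>j. h xbar $ j \<le> 0))"
proof -
  have rho_pos: "rho k > 0" for k
  proof (induction k)
    case 0 then show ?case using rho0 .
  next
    case (Suc k)
    have "gamma * rho k > 0" using gamma Suc by simp
    then show ?case using Suc unfolding rho_upd by simp
  qed
  have rho_mono: "rho k \<le> rho (Suc k)" for k
  proof -
    have "rho k \<le> gamma * rho k" using gamma rho_pos[of k] by simp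
    then show ?thesis unfolding rho_upd by simp
  qed
  have lam_eq: "lam (Suc k) $ j = max 0 (u k $ j + rho k * g (x (Suc k)) $ j)" for k j
    by (simp add: lam_upd vplus_def)
  have lam_nn: "lam (Suc k) $ j \<ge> 0" for k j unfolding lam_eq by simp
  have u_bd: "0 \<le> u k $ j \<and> u k $ j \<le> umax" for k j
  proof (cases k)
    case 0 then show ?thesis using u0 by simp
  next
    case (Suc k')
    show ?thesis unfolding Suc u_upd using lam_nn[of k' j] umax by simp
  qed
  have gcont: "isCont (\<lambda>y. g y $ j) z" for j z
  proof -
    have "(\<lambda>y. g y $ j) differentiable (at z)" using g_C1[of j] unfolding C1_def by blast
    then show ?thesis by (rule differentiable_imp_continuous_within)
  qed
  have hcont: "isCont (\<lambda>y. h y $ j) z" for j z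
  proof -
    have "(\<lambda>y. h y $ j) differentiable (at z)" using h_C1[of j] unfolding C1_def by blast
    then show ?thesis by (rule differentiable_imp_continuous_within)
  qed
  have gradcont: "isCont (grad f) z" if "C1 f" for f :: "real^'n \<Rightarrow> real" and z
  proof -
    have "continuous_on UNIV (grad f)" using that unfolding C1_def by blast
    then show ?thesis using continuous_on_eq_continuous_at[OF open_UNIV] by blast
  qed
  obtain \<phi> where phi: "strict_mono \<phi>" "(x \<circ> \<phi>) \<longlonglongrightarrow> xbar" using limpt by blast
  define \<psi> where "\<psi> i = \<phi> (Suc i) - 1" for i
  have psiS: "Suc (\<psi> i) = \<phi> (Suc i)" for i
  proof -
    have "Suc i \<le> \<phi> (Suc i)" by (rule seq_suble[OF phi(1)])
    then show ?thesis unfolding \<psi>_def by simp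
  qed
  have psi_mono: "strict_mono \<psi>"
  proof (rule strict_monoI)
    fix i j :: nat assume "i < j"
    then have "\<phi> (Suc i) < \<phi> (Suc j)" using phi(1) by (simp add: strict_mono_less)
    then show "\<psi> i < \<psi> j" using psiS[of i] psiS[of j] by simp
  qed
  define Y where "Y i = x (Suc (\<psi> i))" for i
  have Y: "Y \<longlonglongrightarrow> xbar"
  proof -
    have "(\<lambda>i. (x \<circ> \<phi>) (Suc i)) \<longlonglongrightarrow> xbar" by (rule LIMSEQ_Suc[OF phi(2)])
    moreover have "(\<lambda>i. (x \<circ> \<phi>) (Suc i)) = Y" unfolding Y_def psiS by (simp add: o_def)
    ultimately show ?thesis by simp
  qed
  have eps'psi: "(\<lambda>i. eps' (\<psi> i)) \<longlonglongrightarrow> 0"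
    using LIMSEQ_subseq_LIMSEQ[OF eps'_lim psi_mono] by (simp add: o_def)
  have minbd: "\<bar>min (- h (x (Suc k)) $ j) (mu (Suc k) $ j)\<bar> \<le> eps' k" for k j
  proof -
    have "\<bar>vmin (- h (x (Suc k))) (mu (Suc k)) $ j\<bar> \<le> eps' k"
      using component_le_norm_cart inexact2 order_trans by blast
    then show ?thesis by (simp add: vmin_def)
  qed
  have h_feas: "\<forall>j. h xbar $ j \<le> 0"
  proof
    fix j
    have le: "h (x (Suc k)) $ j \<le> eps' k" for k
    proof -
      have "min (- h (x (Suc k)) $ j) (mu (Suc k) $ j) \<le> - h (x (Suc k)) $ j" by (rule min.cobounded1)
      then show ?thesis using minbd[of k j] by linarith
    qed
    have l1: "(\<lambda>i. h (Y i) $ j) \<longlonglongrightarrow> h xbar $ j" by (rule isCont_tendsto_compose[OF hcont Y])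
    show "h xbar $ j \<le> 0"
      by (rule LIMSEQ_le[OF l1 eps'psi]) (use le in \<open>auto simp: Y_def\<close>)
  qed
  define w where "w = (\<Sum>j\<in>UNIV. max 0 (g xbar $ j) *\<^sub>R grad (\<lambda>y. g y $ j) xbar)"
  have main: "(\<forall>j. g xbar $ j \<le> 0) \<or> (\<exists>\<nu> A. (\<forall>j. \<nu> j \<ge> 0) \<and> (\<forall>j\<in>A. h xbar $ j = 0) \<and>
        (\<Sum>j\<in>A. \<nu> j *\<^sub>R grad (\<lambda>y. h y $ j) xbar) = - w)"
  proof (cases "\<exists>K. \<forall>k\<ge>K. rho (Suc k) = rho k")
    case True
    then obtain K where K: "\<And>k. k \<ge> K \<Longrightarrow> rho (Suc k) = rho k" by blast
    define Q where "Q k = norm (vmin (- g (x k)) (lam k))" for k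
    have Qnn: "Q k \<ge> 0" for k unfolding Q_def by simp
    have Qstep: "Q (Suc k) \<le> tau * Q k" if "k \<ge> K" for k
    proof (rule ccontr)
      assume nc: "\<not> Q (Suc k) \<le> tau * Q k"
      then have "rho (Suc k) = gamma * rho k" unfolding rho_upd Q_def by simp
      then have "gamma * rho k = rho k" using K[OF that] by simp
      then have "gamma = 1" using rho_pos[of k] by simp
      then show False using gamma by simp
    qed
    have Qgeo: "Q (n + K) \<le> tau ^ n * Q K" for n
    proof (induction n)
      case 0 then show ?case by simp
    next
      case (Suc n)
      have "Q (Suc n + K) = Q (Suc (n + K))" by simp
      also have "\<dots> \<le> tau * Q (n + K)" by (rule Qstep) simp
      also have "\<dots> \<le> tau * (tau ^ n * Q K)" using Suc tau by (simp add: mult_left_mono)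
      finally show ?case by (simp add: mult.assoc)
    qed
    have "(\<lambda>n. tau ^ n * Q K) \<longlonglongrightarrow> 0"
      by (rule tendsto_mult_left_zero[OF LIMSEQ_power_zero]) (use tau in simp)
    then have "(\<lambda>n. Q (n + K)) \<longlonglongrightarrow> 0"
      by (rule Lim_null_comparison[rotated]) (use Qgeo Qnn in simp)
    then have Q0: "Q \<longlonglongrightarrow> 0" by (rule LIMSEQ_offset)
    have "(\<lambda>i. (Q \<circ> \<phi>) (Suc i)) \<longlonglongrightarrow> 0" by (rule LIMSEQ_Suc[OF LIMSEQ_subseq_LIMSEQ[OF Q0 phi(1)]])
    then have QY: "(\<lambda>i. Q (Suc (\<psi> i))) \<longlonglongrightarrow> 0" unfolding psiS by (simp add: o_def)
    have "g xbar $ j \<le> 0" for j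
    proof -
      have le: "g (x (Suc k)) $ j \<le> Q (Suc k)" for k
      proof (cases "g (x (Suc k)) $ j > 0")
        case True
        have "vmin (- g (x (Suc k))) (lam (Suc k)) $ j = - g (x (Suc k)) $ j"
          using True lam_nn[of k j] by (simp add: vmin_def)
        then have "\<bar>- g (x (Suc k)) $ j\<bar> \<le> Q (Suc k)" unfolding Q_def by (metis component_le_norm_cart)
        then show ?thesis by simp
      next
        case False
        then show ?thesis using Qnn[of "Suc k"] by simp
      qed
      have l1: "(\<lambda>i. g (Y i) $ j) \<longlonglongrightarrow> g xbar $ j" by (rule isCont_tendsto_compose[OF gcont Y])
      show ?thesis
        by (rule LIMSEQ_le[OF l1 QY]) (use le in \<open>auto simp: Y_def\<close>)
    qed
    then show ?thesis by blast
  next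
    case False
    then have incr: "\<And>K. \<exists>k\<ge>K. rho (Suc k) \<noteq> rho k" by blast
    have incs: "incseq rho" by (rule incseq_SucI) (rule rho_mono)
    have grow: "\<exists>K. rho K \<ge> gamma ^ n * rho 0" for n
    proof (induction n)
      case 0 then show ?case by auto
    next
      case (Suc n)
      then obtain K where K: "rho K \<ge> gamma ^ n * rho 0" by blast
      obtain k where k: "k \<ge> K" "rho (Suc k) \<noteq> rho k" using incr by blast
      have rk: "rho (Suc k) = gamma * rho k" using k(2) unfolding rho_upd by (auto split: if_splits)
      have "rho K \<le> rho k" using incs k(1) by (simp add: incseqD)
      then have "gamma * (gamma ^ n * rho 0) \<le> gamma * rho k" using K gamma by simp
      then have "gamma ^ Suc n * rho 0 \<le> rho (Suc k)" unfolding rk by (simp add: mult.assoc)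
      then show ?case by blast
    qed
    have invrho: "(\<lambda>k. inverse (rho k)) \<longlonglongrightarrow> 0"
    proof (rule LIMSEQ_inverse_zero)
      fix r :: real
      obtain n where n: "r / rho 0 < gamma ^ n" using real_arch_pow[OF gamma] by blast
      then have "r < gamma ^ n * rho 0" using rho0 by (simp add: pos_divide_less_eq)
      moreover obtain K where "rho K \<ge> gamma ^ n * rho 0" using grow by blast
      ultimately have "\<forall>m\<ge>K. r < rho m" using incs by (meson incseqD less_le_trans order_trans)
      then show "\<exists>N. \<forall>m\<ge>N. r < rho m" by blast
    qed
    define R where "R i = rho (\<psi> i)" for i
    have Rpos: "R i > 0" for i unfolding R_def by (rule rho_pos)
    have iR: "(\<lambda>i. inverse (R i)) \<longlonglongrightarrow> 0"
      using LIMSEQ_subseq_LIMSEQ[OF invrho psi_mono] unfolding R_def by (simp add: o_def)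
    obtain B where B: "\<And>k. norm (eps k) \<le> B" using eps_bounded unfolding bounded_iff by blast
    define a where "a j = grad (\<lambda>y. h y $ j)" for j
    define b where "b j = grad (\<lambda>y. g y $ j)" for j
    define T where "T z = (\<chi> l. grad (theta (blk l)) z $ l)" for z
    define V where "V i = T (Y i) + (\<Sum>j\<in>UNIV. lam (Suc (\<psi> i)) $ j *\<^sub>R b j (Y i))
        + (\<Sum>j\<in>UNIV. mu (Suc (\<psi> i)) $ j *\<^sub>R a j (Y i))" for i
    have acont: "isCont (a j) z" for j z unfolding a_def by (rule gradcont[OF h_C1])
    have bcont: "isCont (b j) z" for j z unfolding b_def by (rule gradcont[OF g_C1])
    have Vcomp: "\<bar>V i $ l\<bar> \<le> eps (\<psi> i)" for i l
    proof -
      define k where "k = \<psi> i"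
      define E where "E = bgrad blk (blk l) (\<lambda>y. La (theta (blk l)) g y (u k) (rho k)) (x (Suc k))
                     + (\<Sum>j\<in>UNIV. (mu (Suc k) $ j) *\<^sub>R bgrad blk (blk l) (\<lambda>y. h y $ j) (x (Suc k)))"
      have "E $ l = V i $ l"
        unfolding E_def V_def T_def Y_def bgrad_def k_def
        by (simp add: grad_La[OF theta_C1 g_C1 rho_pos] lam_eq a_def b_def)
      moreover have "\<bar>E $ l\<bar> \<le> eps k" unfolding E_def using component_le_norm_cart inexact1 order_trans by blast
      ultimately show ?thesis unfolding k_def by simp
    qed
    have Vnorm: "norm (V i) \<le> of_nat CARD('n) * B" for i
    proof -
      have "norm (V i) \<le> (\<Sum>l\<in>UNIV. \<bar>V i $ l\<bar>)" by (rule norm_le_l1_cart)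
      also have "\<dots> \<le> (\<Sum>l\<in>(UNIV::'n set). B)"
      proof (rule sum_mono)
        fix l :: 'n
        have "eps (\<psi> i) \<le> B" using B[of "\<psi> i"] by simp
        then show "\<bar>V i $ l\<bar> \<le> B" using Vcomp[of i l] by linarith
      qed
      also have "\<dots> = of_nat CARD('n) * B" by simp
      finally show ?thesis .
    qed
    have limV: "(\<lambda>i. inverse (R i) *\<^sub>R V i) \<longlonglongrightarrow> 0"
    proof (rule Lim_null_comparison)
      show "\<forall>\<^sub>F i in sequentially. norm (inverse (R i) *\<^sub>R V i) \<le> inverse (R i) * (of_nat CARD('n) * B)"
      proof (rule always_eventually, rule allI)
        fix i
        have "norm (inverse (R i) *\<^sub>R V i) = inverse (R i) * norm (V i)" using Rpos[of i] by simp
        also have "\<dots> \<le> inverse (R i) * (of_nat CARD('n) * B)"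
          by (rule mult_left_mono[OF Vnorm]) (use Rpos[of i] in simp)
        finally show "norm (inverse (R i) *\<^sub>R V i) \<le> inverse (R i) * (of_nat CARD('n) * B)" .
      qed
      show "(\<lambda>i. inverse (R i) * (of_nat CARD('n) * B)) \<longlonglongrightarrow> 0"
        by (rule tendsto_mult_left_zero[OF iR])
    qed
    have TY: "(\<lambda>i. T (Y i)) \<longlonglongrightarrow> T xbar"
    proof (rule vec_tendstoI)
      fix l
      have "(\<lambda>i. grad (theta (blk l)) (Y i)) \<longlonglongrightarrow> grad (theta (blk l)) xbar"
        by (rule isCont_tendsto_compose[OF gradcont[OF theta_C1] Y])
      then show "(\<lambda>i. T (Y i) $ l) \<longlonglongrightarrow> T xbar $ l" unfolding T_def by (simp add: tendsto_vec_nth)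
    qed
    have limT: "(\<lambda>i. inverse (R i) *\<^sub>R T (Y i)) \<longlonglongrightarrow> 0"
      using tendsto_scaleR[OF iR TY] by simp
    have lamR: "inverse (R i) * lam (Suc (\<psi> i)) $ j = max 0 (g (Y i) $ j + u (\<psi> i) $ j / R i)" for i j
    proof -
      have "lam (Suc (\<psi> i)) $ j = R i * max 0 (g (Y i) $ j + u (\<psi> i) $ j / R i)"
        unfolding lam_eq mx[OF Rpos[of i]] by (simp add: R_def Y_def)
      moreover have "inverse (R i) * R i = 1" using Rpos[of i] by simp
      ultimately show ?thesis by (simp add: mult.assoc[symmetric])
    qed
    have uR: "(\<lambda>i. u (\<psi> i) $ j / R i) \<longlonglongrightarrow> 0" for j
    proof (rule Lim_null_comparison)
      show "\<forall>\<^sub>F i in sequentially. norm (u (\<psi> i) $ j / R i) \<le> umax * inverse (R i)"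
      proof (rule always_eventually, rule allI)
        fix i
        have "norm (u (\<psi> i) $ j / R i) = u (\<psi> i) $ j * inverse (R i)"
          using u_bd[of "\<psi> i" j] Rpos[of i] by (simp add: divide_inverse)
        also have "\<dots> \<le> umax * inverse (R i)"
          by (rule mult_right_mono) (use u_bd[of "\<psi> i" j] Rpos[of i] in simp_all)
        finally show "norm (u (\<psi> i) $ j / R i) \<le> umax * inverse (R i)" .
      qed
      show "(\<lambda>i. umax * inverse (R i)) \<longlonglongrightarrow> 0" by (rule tendsto_mult_right_zero[OF iR])
    qed
    have limG: "(\<lambda>i. \<Sum>j\<in>UNIV. (inverse (R i) * lam (Suc (\<psi> i)) $ j) *\<^sub>R b j (Y i)) \<longlonglongrightarrow> w"
    proof -
      have "(\<lambda>i. \<Sum>j\<in>UNIV. max 0 (g (Y i) $ j + u (\<psi> i) $ j / R i) *\<^sub>R b j (Y i))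
            \<longlonglongrightarrow> (\<Sum>j\<in>UNIV. max 0 (g xbar $ j + 0) *\<^sub>R b j xbar)"
        by (intro tendsto_sum tendsto_scaleR tendsto_max tendsto_const tendsto_add uR
            isCont_tendsto_compose[OF gcont Y] isCont_tendsto_compose[OF bcont Y])
      then show ?thesis unfolding lamR w_def b_def by simp
    qed
    define A where "A = {j. h xbar $ j = 0}"
    define cc where "cc i j = (if j \<in> A then max 0 (mu (Suc (\<psi> i)) $ j * inverse (R i)) else 0)" for i j
    define ee where "ee i j = mu (Suc (\<psi> i)) $ j * inverse (R i) - cc i j" for i j
    have mu_lb: "mu (Suc k) $ j \<ge> - eps' k" for k j
    proof -
      have "min (- h (x (Suc k)) $ j) (mu (Suc k) $ j) \<le> mu (Suc k) $ j" by (rule min.cobounded2)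
      then show ?thesis using minbd[of k j] by linarith
    qed
    have limE: "(\<lambda>i. ee i j) \<longlonglongrightarrow> 0" for j
    proof (rule Lim_null_comparison)
      show "(\<lambda>i. eps' (\<psi> i) * inverse (R i)) \<longlonglongrightarrow> 0"
        using tendsto_mult[OF eps'psi iR] by simp
      show "\<forall>\<^sub>F i in sequentially. norm (ee i j) \<le> eps' (\<psi> i) * inverse (R i)"
      proof (cases "j \<in> A")
        case True
        show ?thesis
        proof (rule always_eventually, rule allI)
          fix i
          have ip: "inverse (R i) > 0" using Rpos[of i] by simp
          show "norm (ee i j) \<le> eps' (\<psi> i) * inverse (R i)"
          proof (cases "mu (Suc (\<psi> i)) $ j \<ge> 0")
            case True2: True
            then have "ee i j = 0" unfolding ee_def cc_def using True ip by simp
            then show ?thesis using eps'_nonneg[of "\<psi> i"] ip by simp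
          next
            case False
            then have m: "mu (Suc (\<psi> i)) $ j * inverse (R i) < 0" using ip by (simp add: mult_neg_pos)
            then have "ee i j = mu (Suc (\<psi> i)) $ j * inverse (R i)" unfolding ee_def cc_def using True by simp
            then have "norm (ee i j) = (- mu (Suc (\<psi> i)) $ j) * inverse (R i)" using m by simp
            also have "\<dots> \<le> eps' (\<psi> i) * inverse (R i)"
              by (rule mult_right_mono) (use mu_lb[of "\<psi> i" j] ip in simp_all)
            finally show ?thesis .
          qed
        qed
      next
        case False
        then have hneg: "h xbar $ j < 0" using h_feas unfolding A_def by (simp add: less_le)
        have l1: "(\<lambda>i. h (Y i) $ j) \<longlonglongrightarrow> h xbar $ j" by (rule isCont_tendsto_compose[OF hcont Y])
        have ev1: "\<forall>\<^sub>F i in sequentially. h (Y i) $ j < h xbar $ j / 2"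
          by (rule order_tendstoD(2)[OF l1]) (use hneg in simp)
        have ev2: "\<forall>\<^sub>F i in sequentially. eps' (\<psi> i) < - h xbar $ j / 2"
          by (rule order_tendstoD(2)[OF eps'psi]) (use hneg in simp)
        show ?thesis
        proof (rule eventually_mono[OF eventually_conj[OF ev1 ev2]])
          fix i assume H: "h (Y i) $ j < h xbar $ j / 2 \<and> eps' (\<psi> i) < - h xbar $ j / 2"
          have ip: "inverse (R i) > 0" using Rpos[of i] by simp
          have gt: "- h (x (Suc (\<psi> i))) $ j > eps' (\<psi> i)" using H unfolding Y_def by simp
          have mb: "\<bar>min (- h (x (Suc (\<psi> i))) $ j) (mu (Suc (\<psi> i)) $ j)\<bar> \<le> eps' (\<psi> i)" by (rule minbd)
          have "mu (Suc (\<psi> i)) $ j < - h (x (Suc (\<psi> i))) $ j"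
          proof (rule ccontr)
            assume "\<not> mu (Suc (\<psi> i)) $ j < - h (x (Suc (\<psi> i))) $ j"
            then have "min (- h (x (Suc (\<psi> i))) $ j) (mu (Suc (\<psi> i)) $ j) = - h (x (Suc (\<psi> i))) $ j" by simp
            then show False using mb gt by simp
          qed
          then have "min (- h (x (Suc (\<psi> i))) $ j) (mu (Suc (\<psi> i)) $ j) = mu (Suc (\<psi> i)) $ j" by simp
          then have mub: "\<bar>mu (Suc (\<psi> i)) $ j\<bar> \<le> eps' (\<psi> i)" using mb by simp
          have "ee i j = mu (Suc (\<psi> i)) $ j * inverse (R i)" unfolding ee_def cc_def using False by simp
          then have "norm (ee i j) = \<bar>mu (Suc (\<psi> i)) $ j\<bar> * inverse (R i)" using ip by (simp add: abs_mult)
          also have "\<dots> \<le> eps' (\<psi> i) * inverse (R i)" by (rule mult_right_mono[OF mub]) (use ip in simp)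
          finally show "norm (ee i j) \<le> eps' (\<psi> i) * inverse (R i)" .
        qed
      qed
    qed
    have limEa: "(\<lambda>i. \<Sum>j\<in>UNIV. ee i j *\<^sub>R a j (Y i)) \<longlonglongrightarrow> (\<Sum>j\<in>UNIV. 0 *\<^sub>R a j xbar)"
      by (intro tendsto_sum tendsto_scaleR limE isCont_tendsto_compose[OF acont Y])
    have ident: "(\<Sum>j\<in>UNIV. cc i j *\<^sub>R a j (Y i)) = inverse (R i) *\<^sub>R V i - inverse (R i) *\<^sub>R T (Y i)
        - (\<Sum>j\<in>UNIV. (inverse (R i) * lam (Suc (\<psi> i)) $ j) *\<^sub>R b j (Y i))
        - (\<Sum>j\<in>UNIV. ee i j *\<^sub>R a j (Y i))" for i
    proof -
      have "inverse (R i) *\<^sub>R V i = inverse (R i) *\<^sub>R T (Y i)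
          + (\<Sum>j\<in>UNIV. (inverse (R i) * lam (Suc (\<psi> i)) $ j) *\<^sub>R b j (Y i))
          + (\<Sum>j\<in>UNIV. (mu (Suc (\<psi> i)) $ j * inverse (R i)) *\<^sub>R a j (Y i))"
        unfolding V_def by (simp add: scaleR_add_right scaleR_sum_right mult.commute)
      moreover have "(\<Sum>j\<in>UNIV. (mu (Suc (\<psi> i)) $ j * inverse (R i)) *\<^sub>R a j (Y i))
          = (\<Sum>j\<in>UNIV. cc i j *\<^sub>R a j (Y i)) + (\<Sum>j\<in>UNIV. ee i j *\<^sub>R a j (Y i))"
        unfolding sum.distrib[symmetric] scaleR_add_left[symmetric] ee_def by simp
      ultimately show ?thesis by (simp add: algebra_simps)
    qed
    have limC: "(\<lambda>i. \<Sum>j\<in>UNIV. cc i j *\<^sub>R a j (Y i)) \<longlonglongrightarrow> 0 - 0 - w - 0"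
      unfolding ident using tendsto_diff[OF tendsto_diff[OF tendsto_diff[OF limV limT] limG] limEa] by simp
    have sumA: "(\<Sum>j\<in>UNIV. cc i j *\<^sub>R a j (Y i)) = (\<Sum>j\<in>A. cc i j *\<^sub>R a j (Y i))" for i
      by (rule sum.mono_neutral_right) (auto simp: cc_def)
    have limC': "(\<lambda>i. \<Sum>j\<in>A. cc i j *\<^sub>R a j (Y i)) \<longlonglongrightarrow> - w"
      using limC unfolding sumA by simp
    have cpld': "\<And>J. J \<subseteq> A \<Longrightarrow> (\<exists>c. (\<forall>j\<in>J. c j \<ge> 0) \<and> (\<exists>j\<in>J. c j \<noteq> 0) \<and> (\<Sum>j\<in>J. c j *\<^sub>R a j xbar) = 0)
        \<Longrightarrow> (\<exists>e>0. \<forall>y\<in>ball xbar e. \<exists>c. (\<exists>j\<in>J. c j \<noteq> 0) \<and> (\<Sum>j\<in>J. c j *\<^sub>R a j y) = 0)"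
      using cpld unfolding CPLD_def A_def a_def by blast
    have ccnn: "\<And>i j. cc i j \<ge> 0" unfolding cc_def by simp
    obtain \<nu> where nu: "\<forall>j. \<nu> j \<ge> 0" "(\<Sum>j\<in>A. \<nu> j *\<^sub>R a j xbar) = - w"
      using cone_limit[OF acont cpld' Y ccnn limC'] by blast
    have "\<forall>j\<in>A. h xbar $ j = 0" unfolding A_def by simp
    then show ?thesis using nu unfolding a_def by blast
  qed
  have conj2: "\<forall>y. (\<forall>j. h y $ j \<le> 0) \<longrightarrow> (norm (vplus (g xbar)))\<^sup>2 \<le> (norm (vplus (g y)))\<^sup>2"
  proof (intro allI impI)
    fix y assume hy: "\<forall>j. h y $ j \<le> 0"
    from main show "(norm (vplus (g xbar)))\<^sup>2 \<le> (norm (vplus (g y)))\<^sup>2"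
    proof
      assume "\<forall>j. g xbar $ j \<le> 0"
      then have "vplus (g xbar) = 0" by (simp add: vplus_def vec_eq_iff)
      then show ?thesis by simp
    next
      assume "\<exists>\<nu> A. (\<forall>j. \<nu> j \<ge> 0) \<and> (\<forall>j\<in>A. h xbar $ j = 0) \<and>
        (\<Sum>j\<in>A. \<nu> j *\<^sub>R grad (\<lambda>y. h y $ j) xbar) = - w"
      then obtain \<nu> A where nA: "\<forall>j. \<nu> j \<ge> 0" "\<forall>j\<in>A. h xbar $ j = 0"
        "(\<Sum>j\<in>A. \<nu> j *\<^sub>R grad (\<lambda>y. h y $ j) xbar) = - w" by blast
      show ?thesis
        by (rule opt_from_kkt[OF g_C1 h_C1 g_convex h_convex, where \<nu>=\<nu> and A=A])
          (use nA hy in \<open>simp_all add: w_def\<close>)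
    qed
  qed
  have conj3: "(\<exists>y. (\<forall>j. g y $ j \<le> 0) \<and> (\<forall>j. h y $ j \<le> 0)) \<longrightarrow>
           (\<forall>j. g xbar $ j \<le> 0) \<and> (\<forall>j. h xbar $ j \<le> 0)"
  proof
    assume "\<exists>y. (\<forall>j. g y $ j \<le> 0) \<and> (\<forall>j. h y $ j \<le> 0)"
    then obtain y where y: "\<forall>j. g y $ j \<le> 0" "\<forall>j. h y $ j \<le> 0" by blast
    have "vplus (g y) = 0" using y(1) by (simp add: vplus_def vec_eq_iff)
    then have "(norm (vplus (g xbar)))\<^sup>2 \<le> 0" using conj2 y(2) by auto
    then have "vplus (g xbar) = 0" by simp
    then have "\<forall>j. max 0 (g xbar $ j) = 0" by (simp add: vplus_def vec_eq_iff)
    then have "\<forall>j. g xbar $ j \<le> 0" by (metis max.cobounded2)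
    then show "(\<forall>j. g xbar $ j \<le> 0) \<and> (\<forall>j. h xbar $ j \<le> 0)" using h_feas by blast
  qed
  show ?thesis using h_feas conj2 conj3 by blast
qed

end
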